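(* Let $q\ge2$, $n\ge1$, $m=n+1$ and $R\in[m]$. Then $$\min_{{\boldsymbol y}\in\Sigma_{q,R}^m}\mathsf{H}^{\mathsf{In}}_{1\text{-}\mathsf{Ins}}({\boldsymbol y})=\log_2 m-\frac{(m-R+1)\log_2(m-R+1)}{m},$$ and the minimum is attained only by skewed channel outputs.
   Context: $\Sigma_q=\{0,\dots,q-1\}$. For sequences ${\boldsymbol x}$ of length $\ell$ and ${\boldsymbol y}$ of length $N\ge\ell$, $\omega_{{\boldsymbol x}}({\boldsymbol y})$ is the number of index tuples $1\le i_1<\dots<i_\ell\le N$ with $y_{i_j}=x_j$. The $1$-insertion channel with input length $n$ maps ${\boldsymbol x}\in\Sigma_q^n$ to ${\boldsymbol y}\in\Sigma_q^{n+1}$ with probability $\omega_{{\boldsymbol x}}({\boldsymbol y})/((n+1)q)$; under uniform transmission ($X$ uniform on $\Sigma_q^n$), $\mathsf{H}^{\mathsf{In}}_{1\text{-}\mathsf{Ins}}({\boldsymbol y})=H(X\mid Y={\boldsymbol y})$ in bits, with posterior $P({\boldsymbol x}\mid {\boldsymbol y})=\Pr\{{\boldsymbol y}\mid{\boldsymbol x}\}/\sum_{{\boldsymbol x}'}\Pr\{{\boldsymbol y}\mid{\boldsymbol x}'\}$. A run is a maximal block of identical consecutive symbols; $\Sigma_{q,R}^m$ is the set of sequences in $\Sigma_q^m$ with exactly $R$ runs. A sequence in $\Sigma_{q,R}^m$ is skewed if it has $R-1$ runs of length one and one run of length $m-(R-1)$. *)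

theory Defs
  imports Complex_Main
begin

definition seqs :: "nat \<Rightarrow> nat \<Rightarrow> nat list set" where
  "seqs q n = {xs. length xs = n \<and> set xs \<subseteq> {..<q}}"

text \<open>Embedding count: number of index sets I (i.e. increasing index tuples)
  of size length x such that the subsequence of y at I equals x.\<close>
definition omega :: "nat list \<Rightarrow> nat list \<Rightarrow> nat" where
  "omega x y = card {I. I \<subseteq> {..<length y} \<and> card I = length x \<and> nths y I = x}"

definition ins_prob :: "nat \<Rightarrow> nat \<Rightarrow> nat list \<Rightarrow> nat list \<Rightarrow> real" where
  "ins_prob q n x y = real (omega x y) / (real (n + 1) * real q)"

text \<open>Posterior under uniform input on Sigma_q^n.\<close>
definition posterior :: "nat \<Rightarrow> nat \<Rightarrow> nat list \<Rightarrow> nat list \<Rightarrow> real" where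
  "posterior q n y x = ins_prob q n x y / (\<Sum>x'\<in>seqs q n. ins_prob q n x' y)"

definition H_in_1ins :: "nat \<Rightarrow> nat \<Rightarrow> nat list \<Rightarrow> real" where
  "H_in_1ins q n y = - (\<Sum>x\<in>seqs q n.
      (let p = posterior q n y x in if p = 0 then 0 else p * log 2 p))"

fun run_lengths :: "'a list \<Rightarrow> nat list" where
  "run_lengths [] = []"
| "run_lengths (a # xs) =
     (let k = length (takeWhile (\<lambda>b. b = a) xs) in
        Suc k # run_lengths (drop k xs))"

definition num_runs :: "'a list \<Rightarrow> nat" where
  "num_runs xs = length (run_lengths xs)"

definition seqs_runs :: "nat \<Rightarrow> nat \<Rightarrow> nat \<Rightarrow> nat list set" where
  "seqs_runs q m R = {y \<in> seqs q m. num_runs y = R}"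

definition skewed :: "'a list \<Rightarrow> bool" where
  "skewed y = (let rl = run_lengths y; R = length rl in
     (\<exists>i<R. rl ! i = length y - (R - 1) \<and> (\<forall>j<R. j \<noteq> i \<longrightarrow> rl ! j = 1)))"

end

theory Submission imports Defs begin
definition dl :: "nat \<Rightarrow> 'a list \<Rightarrow> 'a list" where
  "dl j y = take j y @ drop (Suc j) y"

definition cnt :: "'a list \<Rightarrow> 'a list \<Rightarrow> nat" where
  "cnt y x = card {j. j < length y \<and> dl j y = x}"

definition dset :: "'a list \<Rightarrow> 'a list set" where
  "dset y = (\<lambda>j. dl j y) ` {..<length y}"

lemma dl_low: "j < K \<Longrightarrow> dl j (replicate K a @ rest) = replicate (K - 1) a @ rest"
proof -
  assume "j < K"
  then have "replicate j a @ replicate (K - Suc j) a = replicate (K - 1) a"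
    by (simp add: replicate_add[symmetric])
  then show ?thesis using \<open>j < K\<close> by (simp add: dl_def)
qed

lemma dl_high: "K \<le> j \<Longrightarrow> dl j (replicate K a @ rest) = replicate K a @ dl (j - K) rest"
  by (simp add: dl_def Suc_diff_le)

lemma x0_ne: assumes "K \<ge> 1" "rest = [] \<or> hd rest \<noteq> a"
  shows "replicate (K - 1) a @ rest \<noteq> replicate K a @ z"
proof
  assume h: "replicate (K - 1) a @ rest = replicate K a @ z"
  show False
  proof (cases "rest = []")
    case True
    have "length (replicate (K - 1) a @ rest) = length (replicate K a @ z)" using h by simp
    then show False using True assms by simp
  next
    case False
    have "(replicate (K - 1) a @ rest) ! (K - 1) = hd rest"
      using False by (simp add: nth_append hd_conv_nth)
    moreover have "(replicate K a @ z) ! (K - 1) = a"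
      using assms by (simp add: nth_append)
    ultimately show False using h False assms by simp
  qed
qed

lemma fib_low: assumes "K \<ge> 1" "rest = [] \<or> hd rest \<noteq> a"
  shows "{j. j < length (replicate K a @ rest) \<and> dl j (replicate K a @ rest) = replicate (K - 1) a @ rest}
       = {..<K}"
proof (rule set_eqI, rule iffI)
  fix j assume j: "j \<in> {j. j < length (replicate K a @ rest) \<and> dl j (replicate K a @ rest) = replicate (K - 1) a @ rest}"
  show "j \<in> {..<K}"
  proof (rule ccontr)
    assume "j \<notin> {..<K}"
    then have "K \<le> j" by simp
    then have "dl j (replicate K a @ rest) = replicate K a @ dl (j - K) rest" by (rule dl_high)
    moreover have "dl j (replicate K a @ rest) = replicate (K - 1) a @ rest" using j by simp
    ultimately show False using x0_ne[OF assms, of "dl (j - K) rest"] by simp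
  qed
next
  fix j assume "j \<in> {..<K}" then show "j \<in> {j. j < length (replicate K a @ rest) \<and> dl j (replicate K a @ rest) = replicate (K - 1) a @ rest}"
    using dl_low by auto
qed

lemma fib_high: assumes "K \<ge> 1" "rest = [] \<or> hd rest \<noteq> a"
  shows "{j. j < length (replicate K a @ rest) \<and> dl j (replicate K a @ rest) = replicate K a @ z}
       = (\<lambda>i. i + K) ` {i. i < length rest \<and> dl i rest = z}"
proof (rule set_eqI, rule iffI)
  fix j assume j: "j \<in> {j. j < length (replicate K a @ rest) \<and> dl j (replicate K a @ rest) = replicate K a @ z}"
  have "K \<le> j"
  proof (rule ccontr)
    assume "\<not> K \<le> j"
    then show False using j dl_low[of j K a rest] x0_ne[OF assms, of z] by auto
  qed
  then have "j = (j - K) + K" "j - K < length rest" "dl (j - K) rest = z"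
    using j dl_high[OF \<open>K \<le> j\<close>, of a rest] by auto
  then show "j \<in> (\<lambda>i. i + K) ` {i. i < length rest \<and> dl i rest = z}" by blast
next
  fix j assume "j \<in> (\<lambda>i. i + K) ` {i. i < length rest \<and> dl i rest = z}"
  then obtain i where "j = i + K" "i < length rest" "dl i rest = z" by auto
  then show "j \<in> {j. j < length (replicate K a @ rest) \<and> dl j (replicate K a @ rest) = replicate K a @ z}"
    using dl_high[of K j a rest] by simp
qed

lemma dset_split: assumes "K \<ge> 1"
  shows "dset (replicate K a @ rest) = insert (replicate (K - 1) a @ rest) ((@) (replicate K a) ` dset rest)"
proof (rule set_eqI, rule iffI)
  fix x assume "x \<in> dset (replicate K a @ rest)"
  then obtain j where j: "j < K + length rest" "x = dl j (replicate K a @ rest)" by (auto simp: dset_def)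
  show "x \<in> insert (replicate (K - 1) a @ rest) ((@) (replicate K a) ` dset rest)"
  proof (cases "j < K")
    case True then show ?thesis using j dl_low[OF True, of a rest] by simp
  next
    case False
    then have "x = replicate K a @ dl (j - K) rest" "j - K < length rest" using j dl_high[of K j a rest] by auto
    then show ?thesis by (auto simp: dset_def)
  qed
next
  fix x assume "x \<in> insert (replicate (K - 1) a @ rest) ((@) (replicate K a) ` dset rest)"
  then show "x \<in> dset (replicate K a @ rest)"
  proof
    assume "x = replicate (K - 1) a @ rest"
    then have "x = dl 0 (replicate K a @ rest)" using dl_low[of 0 K a rest] assms by simp
    then show ?thesis using assms by (auto simp: dset_def)
  next
    assume "x \<in> (@) (replicate K a) ` dset rest"
    then obtain i where "i < length rest" "x = replicate K a @ dl i rest" by (auto simp: dset_def)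
    then have "x = dl (i + K) (replicate K a @ rest)" using dl_high[of K "i + K" a rest] by simp
    then show ?thesis using \<open>i < length rest\<close> by (auto simp: dset_def)
  qed
qed

lemma rl_split:
  "xs = replicate (length (takeWhile (\<lambda>b. b = a) xs)) a @ drop (length (takeWhile (\<lambda>b. b = a) xs)) xs"
  "drop (length (takeWhile (\<lambda>b. b = a) xs)) xs = [] \<or> hd (drop (length (takeWhile (\<lambda>b. b = a) xs)) xs) \<noteq> a"
proof -
  have r: "replicate (length (takeWhile (\<lambda>b. b = a) xs)) a = takeWhile (\<lambda>b. b = a) xs"
    by (rule replicate_length_same) (auto dest: set_takeWhileD)
  show "xs = replicate (length (takeWhile (\<lambda>b. b = a) xs)) a @ drop (length (takeWhile (\<lambda>b. b = a) xs)) xs"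
    unfolding r by (simp add: dropWhile_eq_drop[symmetric])
  show "drop (length (takeWhile (\<lambda>b. b = a) xs)) xs = [] \<or> hd (drop (length (takeWhile (\<lambda>b. b = a) xs)) xs) \<noteq> a"
    using hd_dropWhile[of "\<lambda>b. b = a" xs] by (auto simp: dropWhile_eq_drop[symmetric])
qed

lemma key:
  fixes y :: "'a list" and g :: "nat \<Rightarrow> 'b::comm_monoid_add"
  shows "(\<Sum>x\<in>dset y. g (cnt y x)) = sum_list (map g (run_lengths y))"
proof (induction y rule: run_lengths.induct)
  case 1
  then show ?case by (simp add: dset_def)
next
  case (2 a xs)
  define k where "k = length (takeWhile (\<lambda>b. b = a) xs)"
  define rest where "rest = drop k xs"
  have xs: "xs = replicate k a @ rest" and hr: "rest = [] \<or> hd rest \<noteq> a"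
    using rl_split[where xs=xs and a=a] unfolding k_def rest_def by auto
  have y: "a # xs = replicate (Suc k) a @ rest" using xs by simp
  have IH: "(\<Sum>x\<in>dset rest. g (cnt rest x)) = sum_list (map g (run_lengths rest))"
    using "2.IH" k_def rest_def by simp
  have fin: "finite (dset rest)" by (simp add: dset_def)
  have nin: "replicate k a @ rest \<notin> (@) (replicate (Suc k) a) ` dset rest"
    using x0_ne[of "Suc k" rest a] hr by auto
  have ds: "dset (a # xs) = insert (replicate k a @ rest) ((@) (replicate (Suc k) a) ` dset rest)"
    using dset_split[of "Suc k" a rest] y by simp
  have "(\<Sum>x\<in>dset (a # xs). g (cnt (a # xs) x))
      = g (cnt (a # xs) (replicate k a @ rest)) + (\<Sum>x\<in>(@) (replicate (Suc k) a) ` dset rest. g (cnt (a # xs) x))"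
    unfolding ds by (rule sum.insert[OF finite_imageI[OF fin] nin])
  also have "(\<Sum>x\<in>(@) (replicate (Suc k) a) ` dset rest. g (cnt (a # xs) x))
      = (\<Sum>z\<in>dset rest. g (cnt (a # xs) (replicate (Suc k) a @ z)))"
    by (rule sum.reindex_cong[where l = "(@) (replicate (Suc k) a)"]) (auto simp: inj_on_def)
  also have "\<dots> = (\<Sum>z\<in>dset rest. g (cnt rest z))"
  proof (rule sum.cong[OF refl])
    fix z
    have "cnt (a # xs) (replicate (Suc k) a @ z) = card ((\<lambda>i. i + Suc k) ` {i. i < length rest \<and> dl i rest = z})"
      unfolding cnt_def y using fib_high[of "Suc k" rest a z] hr by simp
    also have "\<dots> = cnt rest z" unfolding cnt_def by (rule card_image) (auto simp: inj_on_def)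
    finally show "g (cnt (a # xs) (replicate (Suc k) a @ z)) = g (cnt rest z)" by simp
  qed
  also have "cnt (a # xs) (replicate k a @ rest) = Suc k"
    unfolding cnt_def y using fib_low[of "Suc k" rest a] hr by simp
  finally show ?case using IH by (simp add: k_def rest_def Let_def)
qed

lemma rl_pos: "r \<in> set (run_lengths y) \<Longrightarrow> 1 \<le> r"
  by (induction y rule: run_lengths.induct) (auto simp: Let_def)

lemma rl_sum: "sum_list (run_lengths y) = length y"
proof (induction y rule: run_lengths.induct)
  case 1 then show ?case by simp
next
  case (2 a xs)
  have "length (takeWhile (\<lambda>b. b = a) xs) \<le> length xs" by (rule length_takeWhile_le)
  then show ?case using 2 by (simp add: Let_def)
qed

lemma nths_del: assumes "j < length y" shows "nths y ({..<length y} - {j}) = dl j y"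
proof -
  have y: "y = take j y @ (y ! j # drop (Suc j) y)" using assms by (simp add: id_take_nth_drop)
  have "nths y ({..<length y} - {j}) = nths (take j y) ({..<length y} - {j}) @ nths (y ! j # drop (Suc j) y) {i. i + length (take j y) \<in> {..<length y} - {j}}"
    by (subst y, subst nths_append, simp)
  also have "nths (take j y) ({..<length y} - {j}) = take j y"
    by (rule nths_all) (use assms in auto)
  also have "nths (y ! j # drop (Suc j) y) {i. i + length (take j y) \<in> {..<length y} - {j}} = drop (Suc j) y"
  proof -
    have "nths (y ! j # drop (Suc j) y) {i. i + length (take j y) \<in> {..<length y} - {j}}
        = nths (drop (Suc j) y) {i. Suc i \<in> {i. i + length (take j y) \<in> {..<length y} - {j}}}"
      by (simp add: nths_Cons)
    also have "\<dots> = drop (Suc j) y" by (rule nths_all) (use assms in auto)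
    finally show ?thesis .
  qed
  finally show ?thesis by (simp add: dl_def)
qed

lemma omega_cnt: assumes "length x + 1 = length y" shows "omega x y = cnt y x"
proof -
  let ?m = "length y"
  have eq: "{I. I \<subseteq> {..<?m} \<and> card I = length x \<and> nths y I = x} = (\<lambda>j. {..<?m} - {j}) ` {j. j < ?m \<and> dl j y = x}"
  proof (rule set_eqI, rule iffI)
    fix I assume "I \<in> {I. I \<subseteq> {..<?m} \<and> card I = length x \<and> nths y I = x}"
    then have I: "I \<subseteq> {..<?m}" "card I = length x" "nths y I = x" by auto
    have "card ({..<?m} - I) = 1" using I assms by (simp add: card_Diff_subset finite_subset)
    then obtain j where j: "{..<?m} - I = {j}" by (rule card_1_singletonE)
    have jm: "j < ?m" using j by auto
    have II: "I = {..<?m} - {j}" using j I(1) by auto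
    then have "dl j y = x" using nths_del[OF jm] I(3) by simp
    then show "I \<in> (\<lambda>j. {..<?m} - {j}) ` {j. j < ?m \<and> dl j y = x}" using II jm by blast
  next
    fix I assume "I \<in> (\<lambda>j. {..<?m} - {j}) ` {j. j < ?m \<and> dl j y = x}"
    then obtain j where j: "j < ?m" "dl j y = x" "I = {..<?m} - {j}" by auto
    have "card I = length x" using j assms by simp
    then show "I \<in> {I. I \<subseteq> {..<?m} \<and> card I = length x \<and> nths y I = x}"
      using j nths_del[OF j(1)] by auto
  qed
  have inj: "inj_on (\<lambda>j. {..<?m} - {j}) {j. j < ?m \<and> dl j y = x}"
    by (auto simp: inj_on_def)
  show ?thesis unfolding omega_def cnt_def eq by (rule card_image[OF inj])
qed

lemma sum_list_real: "sum_list (map real xs) = real (sum_list xs)"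
  by (induction xs) auto

lemma sum_list_aux: "sum_list (map (\<lambda>r. real r / M * (log 2 r - L)) rl)
   = (sum_list (map (\<lambda>r. real r * log 2 r) rl) - L * sum_list (map real rl)) / M"
  by (induction rl) (simp_all add: add_divide_distrib[symmetric] algebra_simps)

lemma H_formula:
  assumes y: "y \<in> seqs q m" and mn: "m = n + 1" and q: "q \<ge> 1"
  shows "H_in_1ins q n y = log 2 m - sum_list (map (\<lambda>r. real r * log 2 r) (run_lengths y)) / m"
proof -
  let ?rl = "run_lengths y"
  have ly: "length y = m" using y by (simp add: seqs_def)
  have fin: "finite (seqs q n)" unfolding seqs_def
    using finite_lists_length_eq[of "{..<q}" n] by (simp add: conj_commute)
  have dsub: "dset y \<subseteq> seqs q n"
  proof
    fix x assume "x \<in> dset y"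
    then obtain j where j: "j < m" "x = dl j y" using ly by (auto simp: dset_def)
    have "set x \<subseteq> set y" unfolding j dl_def by (auto dest: in_set_takeD in_set_dropD)
    moreover have "length x = n" using j ly mn by (simp add: dl_def)
    ultimately show "x \<in> seqs q n" using y by (auto simp: seqs_def)
  qed
  have om: "omega x y = cnt y x" if "x \<in> seqs q n" for x
    using that ly mn by (intro omega_cnt) (simp add: seqs_def)
  have c0: "cnt y x = 0" if "x \<notin> dset y" for x
    using that unfolding cnt_def dset_def by auto
  have m0: "real m > 0" using mn by simp
  have sumc: "(\<Sum>x\<in>seqs q n. real (cnt y x)) = real m"
  proof -
    have "(\<Sum>x\<in>seqs q n. real (cnt y x)) = (\<Sum>x\<in>dset y. real (cnt y x))"
      by (rule sum.mono_neutral_right[OF fin dsub]) (auto simp: c0)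
    also have "\<dots> = sum_list (map real ?rl)" by (rule key)
    also have "\<dots> = real m" using rl_sum[of y] ly by (simp add: sum_list_real)
    finally show ?thesis .
  qed
  have S: "(\<Sum>x'\<in>seqs q n. ins_prob q n x' y) = real m / (real m * real q)"
  proof -
    have "(\<Sum>x'\<in>seqs q n. ins_prob q n x' y) = (\<Sum>x'\<in>seqs q n. real (cnt y x') / (real m * real q))"
      by (rule sum.cong) (auto simp: ins_prob_def om mn add.commute)
    also have "\<dots> = (\<Sum>x\<in>seqs q n. real (cnt y x)) / (real m * real q)" by (simp add: sum_divide_distrib)
    finally show ?thesis using sumc by simp
  qed
  have post: "posterior q n y x = real (cnt y x) / m" if "x \<in> seqs q n" for x
  proof -
    have nm: "real (n + 1) = real m" using mn by simp
    have "posterior q n y x = (real (cnt y x) / (real m * real q)) / (real m / (real m * real q))"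
      unfolding posterior_def S unfolding ins_prob_def om[OF that] nm by simp
    also have "\<dots> = real (cnt y x) / m" using q m0 by (simp add: field_simps)
    finally show ?thesis .
  qed
  define \<phi> :: "real \<Rightarrow> real" where "\<phi> p = (if p = 0 then 0 else p * log 2 p)" for p
  have "H_in_1ins q n y = - (\<Sum>x\<in>seqs q n. \<phi> (real (cnt y x) / m))"
    unfolding H_in_1ins_def \<phi>_def Let_def by (rule arg_cong[where f = uminus], rule sum.cong) (auto simp: post)
  also have "(\<Sum>x\<in>seqs q n. \<phi> (real (cnt y x) / m)) = (\<Sum>x\<in>dset y. \<phi> (real (cnt y x) / m))"
    by (rule sum.mono_neutral_right[OF fin dsub]) (auto simp: c0 \<phi>_def)
  also have "\<dots> = sum_list (map (\<lambda>r. \<phi> (real r / m)) ?rl)" by (rule key)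
  also have "\<dots> = sum_list (map (\<lambda>r. real r / m * (log 2 r - log 2 m)) ?rl)"
  proof -
    have "\<phi> (real r / m) = real r / m * (log 2 r - log 2 m)" if "r \<in> set ?rl" for r
      using rl_pos[OF that] m0 by (simp add: \<phi>_def log_divide)
    then show ?thesis by (metis (mono_tags, lifting) map_eq_conv)
  qed
  also have "\<dots> = (sum_list (map (\<lambda>r. real r * log 2 r) ?rl) - log 2 m * real m) / m"
    unfolding sum_list_aux using rl_sum[of y] ly by (simp add: sum_list_real)
  finally show ?thesis using m0 by (simp add: field_simps)
qed

definition hh :: "real \<Rightarrow> real" where "hh r = r * ln r / (r - 1)"

lemma ln_strict: fixes x :: real shows "0 < x \<Longrightarrow> x \<noteq> 1 \<Longrightarrow> ln x < x - 1"
  using ln_le_minus_one[of x] ln_eq_minus_one[of x] by fastforce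

lemma hstep: assumes r: "2 \<le> r" shows "hh r < hh (r + 1)"
proof -
  have A: "ln r < r - 1" using r by (intro ln_strict) auto
  have B0: "ln (r / (r + 1)) \<le> r / (r + 1) - 1" using r by (intro ln_le_minus_one) auto
  have "ln (r / (r + 1)) = ln r - ln (r + 1)" using r by (simp add: ln_div)
  moreover have "r / (r + 1) - 1 = - 1 / (r + 1)" using r by (simp add: field_simps)
  ultimately have B: "ln r + 1 / (r + 1) \<le> ln (r + 1)" using B0 by simp
  have "r * r \<ge> 2 * 2" using r by (intro mult_mono) auto
  then have p: "r * r - 1 > 0" by linarith
  have "(r * r - 1) * (ln r + 1 / (r + 1)) \<le> (r * r - 1) * ln (r + 1)"
    using B p by (intro mult_left_mono) auto
  moreover have "(r * r - 1) * (ln r + 1 / (r + 1)) = (r * r - 1) * ln r + (r - 1)"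
    using r by (simp add: field_simps)
  ultimately have C: "(r * r - 1) * ln r + (r - 1) \<le> (r * r - 1) * ln (r + 1)" by simp
  have D: "r * r * ln r < (r * r - 1) * ln (r + 1)" using A C by (simp add: algebra_simps)
  have "hh r = r * r * ln r / (r * (r - 1))" using r by (simp add: hh_def)
  also have "\<dots> < (r * r - 1) * ln (r + 1) / (r * (r - 1))"
    using D r by (intro divide_strict_right_mono) auto
  also have "\<dots> = hh (r + 1)" using r by (simp add: hh_def field_simps)
  finally show ?thesis .
qed

lemma hmono: "2 \<le> r \<Longrightarrow> r < M \<Longrightarrow> hh (real r) < hh (real M)"
proof (induction M)
  case 0 then show ?case by simp
next
  case (Suc M)
  have e: "real (Suc M) = real M + 1" by simp
  have s: "hh (real M) < hh (real (Suc M))" unfolding e by (rule hstep) (use Suc.prems in simp)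
  show ?case
  proof (cases "r = M")
    case True then show ?thesis using s by simp
  next
    case False then show ?thesis using Suc s by simp
  qed
qed

definition ff :: "nat \<Rightarrow> real" where "ff r = real r * log 2 (real r)"

lemma ff_hh: "2 \<le> r \<Longrightarrow> ff r = (real r - 1) * hh r / ln 2"
  by (simp add: ff_def hh_def log_def)

lemma pointwise:
  assumes "2 \<le> M" "1 \<le> r" "r \<le> M"
  shows "ff r \<le> (real r - 1) * (hh M / ln 2)" and "r \<noteq> 1 \<Longrightarrow> r \<noteq> M \<Longrightarrow> ff r < (real r - 1) * (hh M / ln 2)"
proof -
  have l2: "ln (2::real) > 0" by simp
  have strict: "ff r < (real r - 1) * (hh M / ln 2)" if "r \<noteq> 1" "r \<noteq> M"
  proof -
    have "2 \<le> r" "r < M" using that assms by auto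
    then have "hh r < hh M" by (rule hmono)
    moreover have "real r - 1 > 0" using \<open>2 \<le> r\<close> by simp
    ultimately have "(real r - 1) * hh r / ln 2 < (real r - 1) * hh M / ln 2"
      using l2 by (intro divide_strict_right_mono) auto
    then show ?thesis using ff_hh[OF \<open>2 \<le> r\<close>] by simp
  qed
  show "ff r \<le> (real r - 1) * (hh M / ln 2)"
  proof (cases "r = 1")
    case True then show ?thesis by (simp add: ff_def)
  next
    case False
    show ?thesis
    proof (cases "r = M")
      case True then show ?thesis using ff_hh[of M] assms by simp
    next
      case False2: False
      then show ?thesis using strict False by fastforce
    qed
  qed
  show "r \<noteq> 1 \<Longrightarrow> r \<noteq> M \<Longrightarrow> ff r < (real r - 1) * (hh M / ln 2)" using strict by blast
qed

lemma idx_ineq: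
  fixes r :: "nat \<Rightarrow> nat"
  assumes pos: "\<And>i. i < R \<Longrightarrow> 1 \<le> r i" and sm: "(\<Sum>i<R. r i) = m" and R1: "1 \<le> R"
  shows "(\<Sum>i<R. ff (r i)) \<le> ff (m - R + 1)"
    and "(\<Sum>i<R. ff (r i)) = ff (m - R + 1) \<Longrightarrow> \<exists>i<R. r i = m - R + 1 \<and> (\<forall>j<R. j \<noteq> i \<longrightarrow> r j = 1)"
proof -
  define M where "M = m - R + 1"
  have lower: "card B \<le> (\<Sum>i\<in>B. r i)" if "B \<subseteq> {..<R}" for B
  proof -
    have "finite B" using that finite_subset by blast
    have "(\<Sum>i\<in>B. (1::nat)) \<le> (\<Sum>i\<in>B. r i)" by (rule sum_mono) (use that pos in auto)
    then show ?thesis by simp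
  qed
  have Rm: "R \<le> m" using lower[of "{..<R}"] sm by simp
  have two: "r i + r j + (R - 2) \<le> m" if "i < R" "j < R" "i \<noteq> j" for i j
  proof -
    have "(\<Sum>i<R. r i) = r i + (\<Sum>k\<in>{..<R} - {i}. r k)"
      using that by (simp add: sum.remove)
    also have "(\<Sum>k\<in>{..<R} - {i}. r k) = r j + (\<Sum>k\<in>{..<R} - {i} - {j}. r k)"
      using that by (intro sum.remove) auto
    finally have "m = r i + r j + (\<Sum>k\<in>{..<R} - {i} - {j}. r k)" using sm by simp
    moreover have "card ({..<R} - {i} - {j}) = R - 2" using that by simp
    moreover have "card ({..<R} - {i} - {j}) \<le> (\<Sum>k\<in>{..<R} - {i} - {j}. r k)" by (rule lower) auto
    ultimately show ?thesis by linarith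
  qed
  have one: "r i + (R - 1) \<le> m" if "i < R" for i
  proof -
    have "(\<Sum>i<R. r i) = r i + (\<Sum>k\<in>{..<R} - {i}. r k)"
      using that by (simp add: sum.remove)
    moreover have "card ({..<R} - {i}) = R - 1" using that by simp
    moreover have "card ({..<R} - {i}) \<le> (\<Sum>k\<in>{..<R} - {i}. r k)" by (rule lower) auto
    ultimately show ?thesis using sm by linarith
  qed
  have rM: "r i \<le> M" if "i < R" for i using one[OF that] Rm R1 unfolding M_def by linarith
  have rsum: "(\<Sum>i<R. (real (r i) - 1)) = real M - 1"
  proof -
    have "(\<Sum>i<R. (real (r i) - 1)) = real (\<Sum>i<R. r i) - real R" by (simp add: sum_subtractf)
    then show ?thesis using sm Rm unfolding M_def by simp
  qed
  have "(\<Sum>i<R. ff (r i)) \<le> ff M \<and> ((\<Sum>i<R. ff (r i)) = ff M \<longrightarrow> (\<exists>i<R. r i = M \<and> (\<forall>j<R. j \<noteq> i \<longrightarrow> r j = 1)))"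
  proof (cases "M = 1")
    case True
    then have all1: "r i = 1" if "i < R" for i using rM[OF that] pos[OF that] by simp
    then have "(\<Sum>i<R. ff (r i)) = 0" by (simp add: ff_def)
    moreover have "ff M = 0" using True by (simp add: ff_def)
    moreover have "\<exists>i<R. r i = M \<and> (\<forall>j<R. j \<noteq> i \<longrightarrow> r j = 1)"
      using all1 R1 True by (intro exI[of _ 0]) auto
    ultimately show ?thesis by simp
  next
    case False
    then have M2: "2 \<le> M" unfolding M_def by simp
    define c where "c = hh M / ln 2"
    have le: "ff (r i) \<le> (real (r i) - 1) * c" if "i < R" for i
      unfolding c_def using pointwise(1)[OF M2 pos[OF that] rM[OF that]] .
    have rhs: "(\<Sum>i<R. (real (r i) - 1) * c) = ff M"
      unfolding sum_distrib_right[symmetric] rsum c_def using ff_hh[OF M2] by simp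
    have I1: "(\<Sum>i<R. ff (r i)) \<le> ff M"
      unfolding rhs[symmetric] by (rule sum_mono) (use le in auto)
    have I2: "\<exists>i<R. r i = M \<and> (\<forall>j<R. j \<noteq> i \<longrightarrow> r j = 1)" if eq: "(\<Sum>i<R. ff (r i)) = ff M"
    proof -
      have ext: "r i = 1 \<or> r i = M" if "i < R" for i
      proof (rule ccontr)
        assume "\<not> (r i = 1 \<or> r i = M)"
        then have "ff (r i) < (real (r i) - 1) * c"
          unfolding c_def using pointwise(2)[OF M2 pos[OF \<open>i < R\<close>] rM[OF \<open>i < R\<close>]] by auto
        then have "(\<Sum>i<R. ff (r i)) < (\<Sum>i<R. (real (r i) - 1) * c)"
          using le \<open>i < R\<close> by (intro sum_strict_mono_ex1) auto
        then show False using eq rhs by simp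
      qed
      have "\<exists>i<R. r i = M"
      proof (rule ccontr)
        assume "\<not> (\<exists>i<R. r i = M)"
        then have "r i = 1" if "i < R" for i using ext[OF that] that by blast
        then have "(\<Sum>i<R. r i) = R" by simp
        then show False using sm M2 unfolding M_def by simp
      qed
      then obtain i where i: "i < R" "r i = M" by blast
      have "r j = 1" if "j < R" "j \<noteq> i" for j
      proof (rule ccontr)
        assume "r j \<noteq> 1"
        then have "r j = M" using ext[OF \<open>j < R\<close>] by simp
        then show False using two[OF i(1) \<open>j < R\<close>] \<open>j \<noteq> i\<close> i M2 Rm R1 unfolding M_def by simp
      qed
      then show ?thesis using i by blast
    qed
    show ?thesis using I1 I2 by blast
  qed
  then show "(\<Sum>i<R. ff (r i)) \<le> ff (m - R + 1)"
    and "(\<Sum>i<R. ff (r i)) = ff (m - R + 1) \<Longrightarrow> \<exists>i<R. r i = m - R + 1 \<and> (\<forall>j<R. j \<noteq> i \<longrightarrow> r j = 1)"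
    unfolding M_def by blast+
qed

fun alt :: "nat \<Rightarrow> nat \<Rightarrow> nat list" where
  "alt b 0 = []"
| "alt b (Suc k) = b # alt (1 - b) k"

lemma alt_set: "b \<le> 1 \<Longrightarrow> set (alt b k) \<subseteq> {0, 1}"
  by (induction k arbitrary: b) auto

lemma alt_len: "length (alt b k) = k"
  by (induction k arbitrary: b) auto

lemma alt_hd: "b \<le> 1 \<Longrightarrow> alt b k = [] \<or> hd (alt b k) = b"
  by (cases k) auto

lemma rl_rep: assumes "rest = [] \<or> hd rest \<noteq> a"
  shows "run_lengths (replicate (Suc k) a @ rest) = Suc k # run_lengths rest"
proof -
  have tw: "takeWhile (\<lambda>b. b = a) rest = []" using assms by (cases rest) auto
  have "takeWhile (\<lambda>b. b = a) (replicate k a @ rest) = replicate k a @ takeWhile (\<lambda>b. b = a) rest"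
    by (rule takeWhile_append2) auto
  then have "length (takeWhile (\<lambda>b. b = a) (replicate k a @ rest)) = k" using tw by simp
  then show ?thesis by (simp add: Let_def)
qed

lemma rl_alt: "b \<le> 1 \<Longrightarrow> run_lengths (alt b k) = replicate k 1"
proof (induction k arbitrary: b)
  case 0 then show ?case by simp
next
  case (Suc k)
  have h: "alt (1 - b) k = [] \<or> hd (alt (1 - b) k) \<noteq> b"
  proof -
    have "1 - b \<noteq> b" using Suc.prems by arith
    then show ?thesis using alt_hd[of "1 - b" k] Suc.prems by auto
  qed
  have "run_lengths (alt b (Suc k)) = run_lengths (replicate (Suc 0) b @ alt (1 - b) k)" by simp
  also have "\<dots> = Suc 0 # run_lengths (alt (1 - b) k)" by (rule rl_rep[OF h])
  finally show ?case using Suc.IH[of "1 - b"] by simp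
qed

lemma sum_list_idx: "sum_list (map g xs) = (\<Sum>i<length xs. g (xs ! i))"
  by (simp add: sum_list_sum_nth lessThan_atLeast0)

theorem lemma10:
  fixes q n m R :: nat
  assumes "q \<ge> 2" "n \<ge> 1" "m = n + 1" "1 \<le> R" "R \<le> m"
  shows "(\<exists>y\<in>seqs_runs q m R.
            H_in_1ins q n y = log 2 m - real (m - R + 1) * log 2 (m - R + 1) / m)
       \<and> (\<forall>y\<in>seqs_runs q m R.
            H_in_1ins q n y \<ge> log 2 m - real (m - R + 1) * log 2 (m - R + 1) / m)
       \<and> (\<forall>y\<in>seqs_runs q m R.
            H_in_1ins q n y = log 2 m - real (m - R + 1) * log 2 (m - R + 1) / m
            \<longrightarrow> skewed y)"
proof -
  define M where "M = m - R + 1"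
  have B: "log 2 m - real (m - R + 1) * log 2 (m - R + 1) / m = log 2 m - ff M / m"
    using assms by (simp add: ff_def of_nat_diff M_def)
  have m0: "real m > 0" using assms by simp
  have HF: "H_in_1ins q n y = log 2 m - sum_list (map ff (run_lengths y)) / m" if "y \<in> seqs q m" for y
    using H_formula[OF that assms(3)] assms(1) by (simp add: ff_def[abs_def])
  have P: "sum_list (map ff (run_lengths y)) \<le> ff M
      \<and> (sum_list (map ff (run_lengths y)) = ff M \<longrightarrow> skewed y)" if y: "y \<in> seqs_runs q m R" for y
  proof -
    let ?rl = "run_lengths y"
    have len: "length ?rl = R" using y by (simp add: seqs_runs_def num_runs_def)
    have ly: "length y = m" using y by (simp add: seqs_runs_def seqs_def)
    have sm: "(\<Sum>i<R. ?rl ! i) = m" using rl_sum[of y] ly len sum_list_idx[of "\<lambda>x. x" ?rl] by simp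
    have pos: "1 \<le> ?rl ! i" if "i < R" for i using rl_pos[of "?rl ! i" y] that len by simp
    have S: "sum_list (map ff ?rl) = (\<Sum>i<R. ff (?rl ! i))" using sum_list_idx[of ff ?rl] len by simp
    note I = idx_ineq[of R "\<lambda>i. ?rl ! i" m, OF pos sm assms(4)]
    have "sum_list (map ff ?rl) = ff M \<longrightarrow> skewed y"
    proof
      assume "sum_list (map ff ?rl) = ff M"
      then obtain i where "i < R" "?rl ! i = M" "\<forall>j<R. j \<noteq> i \<longrightarrow> ?rl ! j = 1"
        using I(2) S unfolding M_def by auto
      moreover have "m - R + 1 = m - (R - 1)" using assms(4,5) by simp
      ultimately show "skewed y" unfolding skewed_def Let_def len ly M_def by metis
    qed
    then show ?thesis using I(1) S unfolding M_def by simp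
  qed
  have part1: "\<exists>y\<in>seqs_runs q m R. H_in_1ins q n y = log 2 m - ff M / m"
  proof -
    define y where "y = replicate M 0 @ alt 1 (R - 1)"
    have M1: "M = Suc (M - 1)" unfolding M_def by simp
    have h: "alt 1 (R - 1) = [] \<or> hd (alt 1 (R - 1)) \<noteq> 0" using alt_hd[of 1 "R - 1"] by auto
    have rl: "run_lengths y = M # replicate (R - 1) 1"
      unfolding y_def using rl_rep[OF h, of "M - 1"] M1 rl_alt[of 1 "R - 1"] by simp
    have ly: "length y = m" unfolding y_def using alt_len[of 1 "R - 1"] assms unfolding M_def by simp
    have sy: "set y \<subseteq> {..<q}" unfolding y_def using alt_set[of 1 "R - 1"] assms(1) by auto
    have ys: "y \<in> seqs q m" using ly sy by (simp add: seqs_def)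
    have yr: "y \<in> seqs_runs q m R" using ys rl assms(4) by (simp add: seqs_runs_def num_runs_def)
    have "sum_list (map ff (run_lengths y)) = ff M" unfolding rl by (simp add: ff_def sum_list_replicate)
    then show ?thesis using HF[OF ys] yr by auto
  qed
  have part2: "\<forall>y\<in>seqs_runs q m R. H_in_1ins q n y \<ge> log 2 m - ff M / m"
  proof
    fix y assume y: "y \<in> seqs_runs q m R"
    then have ys: "y \<in> seqs q m" by (simp add: seqs_runs_def)
    have "sum_list (map ff (run_lengths y)) / m \<le> ff M / m"
      using P[OF y] m0 by (intro divide_right_mono) auto
    then show "H_in_1ins q n y \<ge> log 2 m - ff M / m" using HF[OF ys] by simp
  qed
  have part3: "\<forall>y\<in>seqs_runs q m R. H_in_1ins q n y = log 2 m - ff M / m \<longrightarrow> skewed y"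
  proof (intro ballI impI)
    fix y assume y: "y \<in> seqs_runs q m R" and e: "H_in_1ins q n y = log 2 m - ff M / m"
    then have ys: "y \<in> seqs q m" by (simp add: seqs_runs_def)
    have "sum_list (map ff (run_lengths y)) / m = ff M / m" using e HF[OF ys] by simp
    then have "sum_list (map ff (run_lengths y)) = ff M" using m0 by simp
    then show "skewed y" using P[OF y] by simp
  qed
  show ?thesis unfolding B using part1 part2 part3 by blast
qed

end
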